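(* Let $A$ be an abelian group of order $n$. The number of quadruples $(C,Z,S',S'')$ such that $C,Z$ are subgroups of $A$ with $A=C\times Z$, $C$ is cyclic of order $t\geq 4$, $Z$ is an elementary abelian $2$-group, $S'\in\{C,\emptyset,\{1\},C\setminus\{1\}\}$ and $S''\subseteq Z$, is at most $2^{n/4+2\log_2 n-1}$.
   Context: $A=C\times Z$ means $A$ is the internal direct product of its subgroups $C$ and $Z$; the trivial group counts as an elementary abelian $2$-group. *)

theory Defs
  imports Complex_Main "HOL-Algebra.Algebra"
begin

definition internal_dirprod :: "('a, 'b) monoid_scheme \<Rightarrow> 'a set \<Rightarrow> 'a set \<Rightarrow> bool" where
  "internal_dirprod G C Z \<longleftrightarrow> subgroup C G \<and> subgroup Z G \<and>
     C \<inter> Z = {\<one>\<^bsub>G\<^esub>} \<and> C <#>\<^bsub>G\<^esub> Z = carrier G"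

definition elem_abelian_2 :: "('a, 'b) monoid_scheme \<Rightarrow> 'a set \<Rightarrow> bool" where
  "elem_abelian_2 G Z \<longleftrightarrow> subgroup Z G \<and> (\<forall>z\<in>Z. z \<otimes>\<^bsub>G\<^esub> z = \<one>\<^bsub>G\<^esub>)"

end

theory Submission
  imports Defs
begin


lemma (in group) basis_step:
  assumes W: "subgroup W G" "finite W"
  shows "B \<subseteq> W \<Longrightarrow> 2 ^ card B \<le> card (generate G B) \<Longrightarrow>
         \<exists>B'\<subseteq>W. generate G B' = W \<and> 2 ^ card B' \<le> card W"
proof (induct "card W - card (generate G B)" arbitrary: B rule: less_induct)
  case (less B)
  have BW: "B \<subseteq> W" by fact
  have pw: "2 ^ card B \<le> card (generate G B)" by fact
  have Wc: "W \<subseteq> carrier G" using W subgroup.subset by blast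
  have gW: "generate G B \<subseteq> W" using generate_subgroup_incl[OF BW W(1)] .
  show ?case
  proof (cases "generate G B = W")
    case True then show ?thesis using pw BW by metis
  next
    case False
    then obtain g where g: "g \<in> W" "g \<notin> generate G B" using gW by blast
    have gc: "g \<in> carrier G" using g Wc by blast
    have fB: "finite B" using BW W(2) finite_subset by blast
    have gnB: "g \<notin> B" using g(2) by (metis generate.incl)
    let ?B' = "insert g B"
    have B'W: "?B' \<subseteq> W" using BW g by blast
    have gB'W: "generate G ?B' \<subseteq> W" using generate_subgroup_incl[OF B'W W(1)] .
    have sub1: "generate G B \<subseteq> generate G ?B'" by (rule mono_generate) (rule subset_insertI)
    have gin: "g \<in> generate G ?B'" by (rule generate.incl) simp
    have sub2: "(\<lambda>h. g \<otimes> h) ` generate G B \<subseteq> generate G ?B'"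
    proof
      fix y assume "y \<in> (\<lambda>h. g \<otimes> h) ` generate G B"
      then obtain h where h: "h \<in> generate G B" "y = g \<otimes> h" by blast
      have "h \<in> generate G ?B'" using h(1) sub1 by (rule subsetD[rotated])
      then show "y \<in> generate G ?B'" using h(2) gin by (simp add: generate.eng)
    qed
    have genc: "generate G B \<subseteq> carrier G" using gW Wc by (rule subset_trans)
    have sg: "subgroup (generate G B) G" using generate_is_subgroup BW Wc by (meson subset_trans)
    have disj: "generate G B \<inter> (\<lambda>h. g \<otimes> h) ` generate G B = {}"
    proof (rule ccontr)
      assume "generate G B \<inter> (\<lambda>h. g \<otimes> h) ` generate G B \<noteq> {}"
      then obtain h where h: "h \<in> generate G B" "g \<otimes> h \<in> generate G B" by blast
      have hc: "h \<in> carrier G" using h genc by blast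
      have "(g \<otimes> h) \<otimes> inv h \<in> generate G B"
        using h sg by (meson subgroup.m_closed subgroup.m_inv_closed)
      moreover have "(g \<otimes> h) \<otimes> inv h = g" using gc hc by (simp add: m_assoc)
      ultimately show False using g by simp
    qed
    have inj: "inj_on (\<lambda>h. g \<otimes> h) (generate G B)"
      by (rule inj_onI) (meson genc gc l_cancel subsetD)
    have fg: "finite (generate G B)" using gW W(2) finite_subset by blast
    have "card (generate G B \<union> (\<lambda>h. g \<otimes> h) ` generate G B) = 2 * card (generate G B)"
      using card_Un_disjoint[OF fg finite_imageI[OF fg] disj] card_image[OF inj] by simp
    moreover have "card (generate G B \<union> (\<lambda>h. g \<otimes> h) ` generate G B) \<le> card (generate G ?B')"
      using sub1 sub2 card_mono finite_subset[OF gB'W W(2)] by (metis Un_subset_iff)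
    ultimately have c2: "2 * card (generate G B) \<le> card (generate G ?B')" by simp
    have cB': "card ?B' = Suc (card B)" using fB gnB by simp
    have P1: "2 ^ card ?B' \<le> card (generate G ?B')" using cB' pw c2 by simp
    have P2: "card W - card (generate G ?B') < card W - card (generate G B)"
    proof -
      have "generate G B \<subset> generate G ?B'" using sub1 g gin by blast
      then have "card (generate G B) < card (generate G ?B')"
        using psubset_card_mono finite_subset[OF gB'W W(2)] by blast
      moreover have "card (generate G ?B') \<le> card W" using card_mono[OF W(2) gB'W] .
      ultimately show ?thesis by linarith
    qed
    show ?thesis by (rule less(1)[OF P2 B'W P1])
  qed
qed

lemma (in group) exists_basis:
  assumes W: "subgroup W G" "finite W"
  shows "\<exists>B\<subseteq>W. generate G B = W \<and> 2 ^ card B \<le> card W"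
  by (rule basis_step[OF W, of "{}"]) (auto simp: generate_empty)

lemma (in group) index2_mult:
  assumes W: "subgroup W G" "finite W" and sq: "\<forall>x\<in>W. x \<otimes> x = \<one>"
    and H: "subgroup H G" "H \<subseteq> W" "card W \<le> 2 * card H"
    and x: "x \<in> W" and y: "y \<in> W"
  shows "x \<otimes> y \<in> H \<longleftrightarrow> (x \<in> H \<longleftrightarrow> y \<in> H)"
proof -
  have Wc: "W \<subseteq> carrier G" using W subgroup.subset by blast
  have xc: "x \<in> carrier G" using x Wc by (rule subsetD[rotated])
  have yc: "y \<in> carrier G" using y Wc by (rule subsetD[rotated])
  have Hc: "H \<subseteq> carrier G" using H(2) Wc by (rule subset_trans)
  have c1: "x \<in> H \<Longrightarrow> y \<in> H \<Longrightarrow> x \<otimes> y \<in> H" using H(1) by (meson subgroup.m_closed)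
  have c2: "x \<in> H \<Longrightarrow> x \<otimes> y \<in> H \<Longrightarrow> y \<in> H"
  proof -
    assume a: "x \<in> H" "x \<otimes> y \<in> H"
    have "inv x \<otimes> (x \<otimes> y) \<in> H" using a H(1) by (meson subgroup.m_closed subgroup.m_inv_closed)
    moreover have "inv x \<otimes> (x \<otimes> y) = y" using xc yc by (metis inv_closed l_inv l_one m_assoc)
    ultimately show "y \<in> H" by simp
  qed
  have c3: "y \<in> H \<Longrightarrow> x \<otimes> y \<in> H \<Longrightarrow> x \<in> H"
  proof -
    assume a: "y \<in> H" "x \<otimes> y \<in> H"
    have "(x \<otimes> y) \<otimes> inv y \<in> H" using a H(1) by (meson subgroup.m_closed subgroup.m_inv_closed)
    moreover have "(x \<otimes> y) \<otimes> inv y = x" using xc yc by (simp add: m_assoc)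
    ultimately show "x \<in> H" by simp
  qed
  have c4: "x \<notin> H \<Longrightarrow> y \<notin> H \<Longrightarrow> x \<otimes> y \<in> H"
  proof -
    assume a: "x \<notin> H" "y \<notin> H"
    have fH: "finite H" using H(2) W(2) finite_subset by blast
    have disj: "H \<inter> (\<lambda>h. x \<otimes> h) ` H = {}"
    proof (rule ccontr)
      assume "H \<inter> (\<lambda>h. x \<otimes> h) ` H \<noteq> {}"
      then obtain h where h: "h \<in> H" "x \<otimes> h \<in> H" by blast
      have hc: "h \<in> carrier G" using h Hc by blast
      have "(x \<otimes> h) \<otimes> inv h \<in> H"
        using h H(1) by (meson subgroup.m_closed subgroup.m_inv_closed)
      moreover have "(x \<otimes> h) \<otimes> inv h = x" using xc hc by (simp add: m_assoc)
      ultimately show False using a by simp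
    qed
    have inj: "inj_on (\<lambda>h. x \<otimes> h) H"
      by (rule inj_onI) (meson Hc xc l_cancel subsetD)
    have cU: "card (H \<union> (\<lambda>h. x \<otimes> h) ` H) = 2 * card H"
      using card_Un_disjoint[OF fH finite_imageI[OF fH] disj] card_image[OF inj] by simp
    have sU: "H \<union> (\<lambda>h. x \<otimes> h) ` H \<subseteq> W"
    proof -
      have "(\<lambda>h. x \<otimes> h) ` H \<subseteq> W"
        by (rule image_subsetI) (meson subgroup.m_closed[OF W(1)] x H(2) subsetD)
      then show ?thesis using H(2) by blast
    qed
    have "card (H \<union> (\<lambda>h. x \<otimes> h) ` H) = card W"
      using cU H(3) card_mono[OF W(2) sU] by linarith
    then have "H \<union> (\<lambda>h. x \<otimes> h) ` H = W" by (rule card_subset_eq[OF W(2) sU])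
    then obtain h where h: "h \<in> H" "y = x \<otimes> h" using y a by blast
    have hc: "h \<in> carrier G" using h Hc by blast
    have "x \<otimes> y = (x \<otimes> x) \<otimes> h" using h xc hc by (simp add: m_assoc)
    also have "\<dots> = h" using sq x hc by simp
    finally show "x \<otimes> y \<in> H" using h by simp
  qed
  show ?thesis using c1 c2 c3 c4 by blast
qed

lemma (in group) count_index2:
  assumes W: "subgroup W G" "finite W" and sq: "\<forall>x\<in>W. x \<otimes> x = \<one>"
  shows "card {H. subgroup H G \<and> H \<subseteq> W \<and> card W \<le> 2 * card H} \<le> card W"
proof -
  obtain B where B: "B \<subseteq> W" "generate G B = W" "2 ^ card B \<le> card W"
    using exists_basis[OF W] by blast
  have Wc: "W \<subseteq> carrier G" using W subgroup.subset by blast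
  let ?F = "{H. subgroup H G \<and> H \<subseteq> W \<and> card W \<le> 2 * card H}"
  have inj: "inj_on (\<lambda>H. B \<inter> H) ?F"
  proof (rule inj_onI)
    fix H1 H2 assume H1: "H1 \<in> ?F" and H2: "H2 \<in> ?F" and e: "B \<inter> H1 = B \<inter> H2"
    have H1': "subgroup H1 G" "H1 \<subseteq> W" "card W \<le> 2 * card H1" using H1 by auto
    have H2': "subgroup H2 G" "H2 \<subseteq> W" "card W \<le> 2 * card H2" using H2 by auto
    have m1: "\<And>x y. x \<in> W \<Longrightarrow> y \<in> W \<Longrightarrow> x \<otimes> y \<in> H1 \<longleftrightarrow> (x \<in> H1 \<longleftrightarrow> y \<in> H1)"
      by (rule index2_mult[OF W sq H1'])
    have m2: "\<And>x y. x \<in> W \<Longrightarrow> y \<in> W \<Longrightarrow> x \<otimes> y \<in> H2 \<longleftrightarrow> (x \<in> H2 \<longleftrightarrow> y \<in> H2)"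
      by (rule index2_mult[OF W sq H2'])
    have o1: "\<one> \<in> H1" using H1'(1) by (rule subgroup.one_closed)
    have o2: "\<one> \<in> H2" using H2'(1) by (rule subgroup.one_closed)
    have key: "z \<in> H1 \<longleftrightarrow> z \<in> H2" if "z \<in> generate G B" for z
      using that
    proof (induct z rule: generate.induct)
      case one then show ?case using o1 o2 by simp
    next
      case (incl h) then show ?case using e by blast
    next
      case (inv h)
      have hW: "h \<in> W" using inv B(1) by blast
      have hc: "h \<in> carrier G" using hW Wc by (rule subsetD[rotated])
      have hh: "h \<otimes> h = \<one>" using sq hW by simp
      have "inv h = h" by (rule inv_equality[OF hh hc hc])
      then show ?case using inv e by auto
    next
      case (eng h1 h2)
      have "h1 \<in> W" "h2 \<in> W" using eng B(2) by auto
      then show ?case using m1 m2 eng(2) eng(4) by simp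
    qed
    have "z \<in> H1 \<longleftrightarrow> z \<in> H2" for z
    proof (cases "z \<in> W")
      case True then show ?thesis using key B(2) by simp
    next
      case False then show ?thesis using H1'(2) H2'(2) by auto
    qed
    then show "H1 = H2" by (simp add: set_eq_iff)
  qed
  have "card ?F \<le> card (Pow B)"
    by (rule card_inj_on_le[OF inj]) (auto intro: finite_subset[OF B(1) W(2)])
  also have "\<dots> = 2 ^ card B" using finite_subset[OF B(1) W(2)] by (simp add: card_Pow)
  finally show ?thesis using B(3) by linarith
qed



lemma arith_half:
  fixes t k :: int
  assumes "t > 0" "t dvd 2 * k"
  shows "t dvd k \<or> t dvd (k - t div 2)"
proof -
  obtain a where a: "2 * k = t * a" using assms(2) by (auto elim: dvdE)
  show ?thesis
  proof (cases "even a")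
    case True
    then obtain b where "a = 2 * b" by (auto elim: evenE)
    then have "k = t * b" using a by simp
    then show ?thesis by simp
  next
    case False
    then obtain b where b: "a = 2 * b + 1" by (auto elim: oddE)
    have "even (t * a)" using a by (metis dvd_triv_left)
    then have "even t" using False by simp
    then obtain s where s: "t = 2 * s" by (auto elim: evenE)
    have "2 * k = 2 * (s * (2 * b + 1))" using a b s by (simp add: algebra_simps)
    then have "k = s * (2 * b + 1)" by simp
    then have "k - t div 2 = t * b" using s by (simp add: algebra_simps)
    then show ?thesis by simp
  qed
qed

lemma (in group) cyc_gen:
  assumes "subgroup C G" "cyclic_group (subgroup_generated G C)"
  shows "\<exists>g\<in>C. generate G {g} = C"
proof -
  have grp: "group (subgroup_generated G C)" by (rule group_subgroup_generated)
  obtain x where x: "x \<in> carrier (subgroup_generated G C)"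
    and r: "carrier (subgroup_generated G C) = range (\<lambda>n::int. x [^]\<^bsub>subgroup_generated G C\<^esub> n)"
    using group.cyclic_group[OF grp] assms(2) by blast
  have cC: "carrier (subgroup_generated G C) = C"
    using assms(1) by (rule subgroup.carrier_subgroup_generated_subgroup)
  have "range (\<lambda>n::int. x [^]\<^bsub>subgroup_generated G C\<^esub> n) = range (\<lambda>n::int. x [^] n)"
    using int_pow_subgroup_generated[OF x] by simp
  then have C: "C = range (\<lambda>n::int. x [^] n)" using r cC by simp
  have xC: "x \<in> C" using x cC by simp
  have xc: "x \<in> carrier G" using xC assms(1) subgroup.subset by blast
  have "generate G {x} = C" using generate_pow[OF xc] C by auto
  then show ?thesis using xC by blast
qed

lemma (in group) sq_ne_one:
  assumes "g \<in> carrier G" "finite (generate G {g})" "card (generate G {g}) \<ge> 4"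
  shows "g \<otimes> g \<noteq> \<one>"
proof
  assume h: "g \<otimes> g = \<one>"
  have "g [^] (2::nat) = g \<otimes> g" using assms(1) by (simp add: numeral_2_eq_2)
  then have "ord g dvd 2" using h pow_eq_id[OF assms(1)] by simp
  then have "ord g \<le> 2" by (simp add: dvd_imp_le)
  moreover have "ord g = card (generate G {g})" using generate_pow_card[OF assms(1)] .
  ultimately show False using assms(3) by simp
qed

lemma (in group) invol_card:
  assumes "g \<in> carrier G" "generate G {g} = C" "finite C"
  shows "card {c \<in> C. c \<otimes> c = \<one>} \<le> 2"
proof -
  define t where "t = ord g"
  have tc: "t = card C" using generate_pow_card[OF assms(1)] assms(2) t_def by simp
  have "\<one> \<in> C" using assms(2) generate.one by blast
  then have tpos: "t > 0" using tc assms(3) card_gt_0_iff by blast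
  have sub: "{c \<in> C. c \<otimes> c = \<one>} \<subseteq> {\<one>, g [^] (int t div 2)}"
  proof
    fix c assume c: "c \<in> {c \<in> C. c \<otimes> c = \<one>}"
    then obtain k :: int where k: "c = g [^] k" using generate_pow[OF assms(1)] assms(2) by auto
    have e: "g [^] (k + k) = g [^] k \<otimes> g [^] k" by (rule int_pow_mult[OF assms(1)])
    have "g [^] (k + k) = \<one>" using c k by (simp only: e) simp
    then have "int t dvd (k + k)" using int_pow_eq_id[OF assms(1), of "k + k"] t_def by blast
    then have "int t dvd 2 * k" by (metis mult_2)
    then have "int t dvd k \<or> int t dvd (k - int t div 2)" using arith_half tpos by simp
    then show "c \<in> {\<one>, g [^] (int t div 2)}"
    proof
      assume "int t dvd k"
      then have "c = \<one>" using k int_pow_eq_id[OF assms(1)] t_def by simp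
      then show ?thesis by simp
    next
      assume "int t dvd (k - int t div 2)"
      then have "g [^] (int t div 2) = g [^] k" using int_pow_eq[OF assms(1)] t_def by simp
      then show ?thesis using k by simp
    qed
  qed
  have "card {c \<in> C. c \<otimes> c = \<one>} \<le> card {\<one>, g [^] (int t div 2)}"
    by (rule card_mono) (auto simp: sub)
  also have "\<dots> \<le> 2" by (simp add: card_insert_le_m1)
  finally show ?thesis .
qed



lemma (in comm_group) dirprod_card:
  assumes "internal_dirprod G C Z" "finite (carrier G)"
  shows "card C * card Z = card (carrier G)"
proof -
  have sC: "subgroup C G" and sZ: "subgroup Z G" and I: "C \<inter> Z = {\<one>}" and M: "C <#> Z = carrier G"
    using assms(1) unfolding internal_dirprod_def by auto
  have Cc: "C \<subseteq> carrier G" using sC subgroup.subset by blast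
  have Zc: "Z \<subseteq> carrier G" using sZ subgroup.subset by blast
  have img: "carrier G = (\<lambda>(c, z). c \<otimes> z) ` (C \<times> Z)"
  proof -
    have "C <#> Z = (\<lambda>(c, z). c \<otimes> z) ` (C \<times> Z)" unfolding set_mult_def by force
    then show ?thesis using M by simp
  qed
  have inj: "inj_on (\<lambda>(c, z). c \<otimes> z) (C \<times> Z)"
  proof (rule inj_onI, clarsimp)
    fix c z c' z' assume c: "c \<in> C" and z: "z \<in> Z" and c': "c' \<in> C" and z': "z' \<in> Z"
      and e: "c \<otimes> z = c' \<otimes> z'"
    have cc: "c \<in> carrier G" using c Cc by (rule subsetD[rotated])
    have zc: "z \<in> carrier G" using z Zc by (rule subsetD[rotated])
    have cc': "c' \<in> carrier G" using c' Cc by (rule subsetD[rotated])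
    have zc': "z' \<in> carrier G" using z' Zc by (rule subsetD[rotated])
    define d where "d = inv c' \<otimes> c"
    have dc: "d \<in> carrier G" using d_def cc cc' by simp
    have dC: "d \<in> C" using d_def c c' sC by (meson subgroup.m_closed subgroup.m_inv_closed)
    have c_eq: "c = c' \<otimes> d" using inv_solve_left'[OF dc cc' cc] d_def by simp
    have "c' \<otimes> (d \<otimes> z) = c' \<otimes> z'" using e c_eq cc' dc zc by (simp add: m_assoc)
    then have dz: "d \<otimes> z = z'" using cc' dc zc zc' by (meson l_cancel m_closed)
    have "d = z' \<otimes> inv z" using inv_solve_right[OF dc zc' zc] dz by simp
    then have "d \<in> Z" using z z' sZ by (metis subgroup.m_closed subgroup.m_inv_closed)
    then have "d = \<one>" using dC I by blast
    then have "c = c'" using c_eq cc' by simp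
    moreover have "z = z'" using dz \<open>d = \<one>\<close> zc by simp
    ultimately show "c = c' \<and> z = z'" by simp
  qed
  have "card (carrier G) = card (C \<times> Z)" using img card_image[OF inj] by simp
  then show ?thesis by (simp add: card_cartesian_product)
qed

lemma (in comm_group) omega_bound:
  assumes "internal_dirprod G C Z" "finite (carrier G)" "elem_abelian_2 G Z"
    "g \<in> carrier G" "generate G {g} = C"
  shows "card {x \<in> carrier G. x \<otimes> x = \<one>} \<le> 2 * card Z"
proof -
  have sC: "subgroup C G" and sZ: "subgroup Z G" and M: "C <#> Z = carrier G"
    using assms(1) unfolding internal_dirprod_def by auto
  have zsq: "\<forall>z\<in>Z. z \<otimes> z = \<one>" using assms(3) unfolding elem_abelian_2_def by auto
  have Cc: "C \<subseteq> carrier G" using sC subgroup.subset by blast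
  have Zc: "Z \<subseteq> carrier G" using sZ subgroup.subset by blast
  have fC: "finite C" using Cc assms(2) finite_subset by blast
  have fZ: "finite Z" using Zc assms(2) finite_subset by blast
  let ?I = "{c \<in> C. c \<otimes> c = \<one>}"
  have sub: "{x \<in> carrier G. x \<otimes> x = \<one>} \<subseteq> (\<lambda>(c, z). c \<otimes> z) ` (?I \<times> Z)"
  proof
    fix x assume x: "x \<in> {x \<in> carrier G. x \<otimes> x = \<one>}"
    then have "x \<in> C <#> Z" using M by simp
    then obtain c z where c: "c \<in> C" and z: "z \<in> Z" and xe: "x = c \<otimes> z"
      unfolding set_mult_def by blast
    have cc: "c \<in> carrier G" using c Cc by (rule subsetD[rotated])
    have zc: "z \<in> carrier G" using z Zc by (rule subsetD[rotated])
    have "(c \<otimes> c) \<otimes> (z \<otimes> z) = x \<otimes> x" using xe cc zc by (simp add: m_ac)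
    then have "c \<otimes> c = \<one>" using x zsq z cc by simp
    then show "x \<in> (\<lambda>(c, z). c \<otimes> z) ` (?I \<times> Z)" using c z xe by auto
  qed
  have "card {x \<in> carrier G. x \<otimes> x = \<one>} \<le> card ((\<lambda>(c, z). c \<otimes> z) ` (?I \<times> Z))"
    by (rule card_mono[OF _ sub]) (simp add: fC fZ)
  also have "\<dots> \<le> card (?I \<times> Z)" by (rule card_image_le) (simp add: fC fZ)
  also have "\<dots> = card ?I * card Z" by (simp add: card_cartesian_product)
  also have "\<dots> \<le> 2 * card Z" using invol_card[OF assms(4,5) fC] by simp
  finally show ?thesis .
qed



lemma (in group) gen_inv:
  assumes "g \<in> carrier G" "generate G {g} = C"
  shows "generate G {inv g} = C"
proof -
  have sC: "subgroup C G" using generate_is_subgroup[of "{g}"] assms by simp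
  have gC: "g \<in> C" using assms(2) generate.incl[of g "{g}" G] by simp
  have igC: "inv g \<in> C" using gC sC by (rule subgroup.m_inv_closed[rotated])
  have s1: "generate G {inv g} \<subseteq> C" using igC sC by (intro generate_subgroup_incl) auto
  have sI: "subgroup (generate G {inv g}) G" using generate_is_subgroup[of "{inv g}"] assms(1) by simp
  have "inv (inv g) \<in> generate G {inv g}"
    using generate.incl[of "inv g" "{inv g}" G] sI by (simp add: subgroup.m_inv_closed)
  then have "g \<in> generate G {inv g}" using assms(1) by simp
  then have "generate G {g} \<subseteq> generate G {inv g}" using sI by (intro generate_subgroup_incl) auto
  then show ?thesis using s1 assms(2) by simp
qed

lemma powr_helper: "(2::real) powr (a + b - 1) = 2 powr a * 2 powr b / 2"
  by (simp add: powr_diff powr_add)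

lemma card4: "card {a, b, c, d} \<le> 4"
  by (simp add: card_insert_if)

lemma (in comm_group) main_bound:
  assumes fin: "finite (carrier G)"
  shows "real (card {(C, Z, S1, S2).
            internal_dirprod G C Z \<and>
            cyclic_group (subgroup_generated G C) \<and> card C \<ge> 4 \<and>
            elem_abelian_2 G Z \<and>
            S1 \<in> {C, {}, {\<one>}, C - {\<one>}} \<and>
            S2 \<subseteq> Z})
         \<le> 2 powr (real (order G) / 4 + 2 * log 2 (real (order G)) - 1)"
proof -
  define n where "n = order G"
  have n_def': "n = card (carrier G)" using n_def order_def by simp
  have npos: "n > 0" using n_def' fin one_closed card_gt_0_iff by blast
  define Om where "Om = {x \<in> carrier G. x \<otimes> x = \<one>}"
  have Omc: "Om \<subseteq> carrier G" using Om_def by blast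
  have fOm: "finite Om" using Omc fin finite_subset by blast
  have sqOm: "\<forall>x\<in>Om. x \<otimes> x = \<one>" using Om_def by blast
  have subOm: "subgroup Om G"
  proof (rule subgroupI)
    show "Om \<subseteq> carrier G" by (rule Omc)
    show "Om \<noteq> {}" using Om_def by auto
  next
    fix a assume a: "a \<in> Om"
    have ac: "a \<in> carrier G" using a Omc by (rule subsetD[rotated])
    have "inv a = a" using inv_equality[of a a] ac sqOm a by simp
    then show "inv a \<in> Om" using a by simp
  next
    fix a b assume a: "a \<in> Om" and b: "b \<in> Om"
    have ac: "a \<in> carrier G" using a Omc by (rule subsetD[rotated])
    have bc: "b \<in> carrier G" using b Omc by (rule subsetD[rotated])
    have "(a \<otimes> b) \<otimes> (a \<otimes> b) = (a \<otimes> a) \<otimes> (b \<otimes> b)" using ac bc by (simp add: m_ac)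
    also have "\<dots> = \<one>" using a b sqOm by simp
    finally show "a \<otimes> b \<in> Om" using Om_def ac bc by simp
  qed
  define w where "w = card Om"
  have wn: "w \<le> n" using card_mono[OF fin Omc] w_def n_def' by simp
  define W where "W = {H. subgroup H G \<and> H \<subseteq> Om \<and> card Om \<le> 2 * card H}"
  have cW: "card W \<le> w" using count_index2[OF subOm fOm sqOm] W_def w_def by simp
  have fW: "finite W" using W_def fOm by (intro finite_subset[of W "Pow Om"]) auto
  define P where "P = {(C, Z). internal_dirprod G C Z \<and> cyclic_group (subgroup_generated G C) \<and>
      4 \<le> card C \<and> elem_abelian_2 G Z}"
  have fP: "finite P"
  proof (rule finite_subset[of P "Pow (carrier G) \<times> Pow (carrier G)"])
    show "P \<subseteq> Pow (carrier G) \<times> Pow (carrier G)"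
      unfolding P_def internal_dirprod_def using subgroup.subset by fastforce
    show "finite (Pow (carrier G) \<times> Pow (carrier G))" using fin by simp
  qed
  have pairF: "subgroup C G \<and> subgroup Z G \<and> finite C \<and> finite Z \<and> 4 \<le> card C \<and>
      (\<exists>g\<in>C. generate G {g} = C) \<and> 4 * card Z \<le> n \<and> Z \<in> W"
    if p: "(C, Z) \<in> P" for C Z
  proof -
    have D: "internal_dirprod G C Z" and cy: "cyclic_group (subgroup_generated G C)"
      and c4: "4 \<le> card C" and E: "elem_abelian_2 G Z" using p P_def by auto
    have sC: "subgroup C G" and sZ: "subgroup Z G" using D internal_dirprod_def by auto
    have Cc: "C \<subseteq> carrier G" using sC subgroup.subset by blast
    have Zc: "Z \<subseteq> carrier G" using sZ subgroup.subset by blast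
    have fC: "finite C" using Cc fin finite_subset by blast
    have fZ: "finite Z" using Zc fin finite_subset by blast
    obtain g where g: "g \<in> C" "generate G {g} = C" using cyc_gen[OF sC cy] by blast
    have gc: "g \<in> carrier G" using g(1) Cc by (rule subsetD[rotated])
    have "card C * card Z = n" using dirprod_card[OF D fin] n_def' by simp
    then have "4 * card Z \<le> n" using c4 by (metis mult_le_mono1)
    moreover have "Z \<in> W"
    proof -
      have "Z \<subseteq> Om" using E Zc unfolding elem_abelian_2_def Om_def by auto
      moreover have "card Om \<le> 2 * card Z" using omega_bound[OF D fin E gc g(2)] Om_def by simp
      ultimately show ?thesis using sZ W_def by simp
    qed
    ultimately show ?thesis using sC sZ fC fZ c4 g by blast
  qed
  define gens where "gens C = {g \<in> carrier G. generate G {g} = C}" for C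
  define CC where "CC = fst ` P"
  have fCC: "finite CC" using CC_def fP by simp
  have gensF: "2 \<le> card (gens C) \<and> gens C \<subseteq> carrier G - Om" if C: "C \<in> CC" for C
  proof -
    obtain Z where p: "(C, Z) \<in> P" using C CC_def by force
    have sC: "subgroup C G" and fC: "finite C" and c4: "4 \<le> card C"
      and ex: "\<exists>g\<in>C. generate G {g} = C" using pairF[OF p] by auto
    obtain g where g: "g \<in> C" "generate G {g} = C" using ex by blast
    have gc: "g \<in> carrier G" using g(1) sC subgroup.subset by blast
    have sub: "gens C \<subseteq> carrier G - Om"
    proof
      fix h assume h: "h \<in> gens C"
      have hc: "h \<in> carrier G" and hg: "generate G {h} = C" using h gens_def by auto
      have "h \<otimes> h \<noteq> \<one>" using sq_ne_one[OF hc] hg fC c4 by simp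
      then show "h \<in> carrier G - Om" using hc Om_def by simp
    qed
    have "g \<otimes> g \<noteq> \<one>" using sq_ne_one[OF gc] g(2) fC c4 by simp
    then have ne: "inv g \<noteq> g" using gc by (metis r_inv)
    have "{g, inv g} \<subseteq> gens C" using gc g(2) gen_inv[OF gc g(2)] gens_def by simp
    moreover have "finite (gens C)" using sub fin by (meson finite_Diff finite_subset)
    ultimately have "card {g, inv g} \<le> card (gens C)" by (rule card_mono[rotated])
    then have "2 \<le> card (gens C)" using ne by simp
    then show ?thesis using sub by simp
  qed
  have cCC: "2 * card CC \<le> n - w"
  proof -
    have "card (\<Union>C\<in>CC. gens C) = (\<Sum>C\<in>CC. card (gens C))"
    proof (rule card_UN_disjoint[OF fCC])
      show "\<forall>C\<in>CC. finite (gens C)" using gensF fin by (meson finite_Diff finite_subset)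
      show "\<forall>i\<in>CC. \<forall>j\<in>CC. i \<noteq> j \<longrightarrow> gens i \<inter> gens j = {}" using gens_def by auto
    qed
    moreover have "(\<Sum>C\<in>CC. 2) \<le> (\<Sum>C\<in>CC. card (gens C))" using gensF by (intro sum_mono) simp
    moreover have "card (\<Union>C\<in>CC. gens C) \<le> card (carrier G - Om)"
      using gensF fin by (intro card_mono) auto
    moreover have "card (carrier G - Om) = n - w" using card_Diff_subset[OF fOm Omc] n_def' w_def by simp
    ultimately show ?thesis by (simp add: mult.commute)
  qed
  have cP: "card P \<le> card CC * w"
  proof -
    have "P \<subseteq> CC \<times> W"
    proof
      fix p assume p: "p \<in> P"
      obtain C Z where pe: "p = (C, Z)" by (cases p)
      have pCZ: "(C, Z) \<in> P" using p pe by simp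
      have "C \<in> CC" unfolding CC_def using pCZ by (metis fst_conv image_eqI)
      moreover have "Z \<in> W" using pairF[OF pCZ] by simp
      ultimately show "p \<in> CC \<times> W" using pe by simp
    qed
    moreover have "finite (CC \<times> W)" using fCC fW by simp
    ultimately have "card P \<le> card (CC \<times> W)" by (intro card_mono)
    also have "\<dots> = card CC * card W" by (rule card_cartesian_product)
    also have "\<dots> \<le> card CC * w" using cW by simp
    finally show ?thesis .
  qed
  define Q where "Q = {(C, Z, S1, S2).
            internal_dirprod G C Z \<and>
            cyclic_group (subgroup_generated G C) \<and> card C \<ge> 4 \<and>
            elem_abelian_2 G Z \<and>
            S1 \<in> {C, {}, {\<one>}, C - {\<one>}} \<and>
            S2 \<subseteq> Z}"
  define F where "F (p :: 'a set \<times> 'a set) = {fst p} \<times> {snd p} \<times> {fst p, {}, {\<one>}, fst p - {\<one>}} \<times> Pow (snd p)" for p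
  have QF: "Q \<subseteq> (\<Union>p\<in>P. F p)"
  proof
    fix q assume q: "q \<in> Q"
    obtain C Z S1 S2 where qe: "q = (C, Z, S1, S2)" by (cases q) auto
    have "(C, Z) \<in> P" "S1 \<in> {C, {}, {\<one>}, C - {\<one>}}" "S2 \<subseteq> Z" using q qe Q_def P_def by auto
    then show "q \<in> (\<Union>p\<in>P. F p)" using qe F_def by (intro UN_I[of "(C, Z)"]) auto
  qed
  have cF: "card (F p) \<le> 4 * 2 ^ card (snd p)" if p: "p \<in> P" for p
  proof -
    obtain C Z where pe: "p = (C, Z)" by (cases p)
    have fZ: "finite Z" using pairF[of C Z] p pe by simp
    have "card (F p) = card {C, {}, {\<one>}, C - {\<one>}} * card (Pow Z)"
      using pe F_def by (simp add: card_cartesian_product)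
    also have "\<dots> \<le> 4 * card (Pow Z)"
    proof -
      have "card {C, {}, {\<one>}, C - {\<one>}} \<le> 4"
        by (rule card4)
      then show ?thesis by simp
    qed
    also have "\<dots> = 4 * 2 ^ card Z" using fZ by (simp add: card_Pow)
    finally show ?thesis using pe by simp
  qed
  have fF: "finite (F p)" if "p \<in> P" for p
  proof -
    obtain C Z where pe: "p = (C, Z)" by (cases p)
    have fZ: "finite Z" using pairF[of C Z] that pe by auto
    then show ?thesis using pe F_def by simp
  qed
  have "card Q \<le> card (\<Union>p\<in>P. F p)" using QF fP fF by (intro card_mono) auto
  also have "\<dots> \<le> (\<Sum>p\<in>P. card (F p))" by (rule card_UN_le[OF fP])
  finally have cQ: "card Q \<le> (\<Sum>p\<in>P. card (F p))" .
  have "real (card Q) \<le> (\<Sum>p\<in>P. real (card (F p)))" using cQ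
    by (metis of_nat_le_iff of_nat_sum)
  also have "\<dots> \<le> (\<Sum>p\<in>P. 4 * 2 powr (real n / 4))"
  proof (rule sum_mono)
    fix p assume p: "p \<in> P"
    obtain C Z where pe: "p = (C, Z)" by (cases p)
    have z4: "4 * card Z \<le> n" using pairF[of C Z] p pe by simp
    have c1: "card (F p) \<le> 4 * 2 ^ card Z" using cF[OF p] pe by simp
    have "real (card (F p)) \<le> real (4 * 2 ^ card Z)" using c1 by (simp only: of_nat_le_iff)
    then have "real (card (F p)) \<le> 4 * 2 ^ card Z" by simp
    also have "(2::real) ^ card Z = 2 powr (real (card Z))" by (simp add: powr_realpow)
    also have "\<dots> \<le> 2 powr (real n / 4)" using z4 by (intro powr_mono) auto
    finally show "real (card (F p)) \<le> 4 * 2 powr (real n / 4)" by simp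
  qed
  also have "\<dots> = real (card P) * 4 * 2 powr (real n / 4)" by simp
  also have "\<dots> \<le> (real n ^ 2 / 2) * 2 powr (real n / 4)"
  proof -
    have a: "2 * real (card CC) \<le> real n - real w" using cCC wn by linarith
    have b: "real (card P) \<le> real (card CC) * real w" using cP by (metis of_nat_le_iff of_nat_mult)
    have "real (card CC) * real w * 2 \<le> (real n - real w) * real w"
      using mult_right_mono[OF a, of "real w"] by (simp add: algebra_simps)
    moreover have "(real n - real w) * real w * 4 \<le> real n ^ 2"
    proof -
      have sq: "0 \<le> (real n - 2 * real w) ^ 2" by simp
      have e: "(real n - 2 * real w) ^ 2 = real n ^ 2 - (real n - real w) * real w * 4"
        by (simp add: power2_eq_square algebra_simps)
      show ?thesis using sq e by linarith
    qed
    ultimately have "real (card P) * 4 \<le> real n ^ 2 / 2" using b by linarith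
    then show ?thesis by (intro mult_right_mono) auto
  qed
  also have "\<dots> = 2 powr (real n / 4 + 2 * log 2 (real n) - 1)"
  proof -
    have "(2::real) powr (2 * log 2 (real n)) = 2 powr (log 2 (real n) + log 2 (real n))"
      by (simp only: mult_2)
    also have "\<dots> = real n ^ 2"
    proof -
      have pl: "(2::real) powr log 2 (real n) = real n" using npos by simp
      show ?thesis by (simp only: powr_add pl power2_eq_square)
    qed
    finally have l2: "(2::real) powr (2 * log 2 (real n)) = real n ^ 2" .
    have h: "(2::real) powr (real n / 4 + 2 * log 2 (real n) - 1)
        = 2 powr (real n / 4) * 2 powr (2 * log 2 (real n)) / 2"
      by (rule powr_helper)
    show ?thesis unfolding h l2 by (simp add: algebra_simps)
  qed
  finally have "real (card Q) \<le> 2 powr (real n / 4 + 2 * log 2 (real n) - 1)" .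
  then show ?thesis by (simp only: Q_def n_def)
qed


theorem lemma5p3:
  fixes A :: "('a, 'b) monoid_scheme" and n :: nat
  assumes "comm_group A" and "finite (carrier A)" and "order A = n"
  shows "real (card {(C, Z, S1, S2).
            internal_dirprod A C Z \<and>
            cyclic_group (subgroup_generated A C) \<and> card C \<ge> 4 \<and>
            elem_abelian_2 A Z \<and>
            S1 \<in> {C, {}, {\<one>\<^bsub>A\<^esub>}, C - {\<one>\<^bsub>A\<^esub>}} \<and>
            S2 \<subseteq> Z})
         \<le> 2 powr (real n / 4 + 2 * log 2 (real n) - 1)"
  using comm_group.main_bound[OF assms(1,2)] assms(3) by simp

end
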